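(* Let $q$ be even and $n\ge1$. If $W$ is an $n$-dimensional Wild subspace over $\mathrm{GF}(q)$, then $\{f(1): f\in W\}=\mathrm{GF}(q^n)$.
   Context: Let $q$ be even. An o-permutation over $\mathrm{GF}(q^n)$ is a function $f:\mathrm{GF}(q^n)\to\mathrm{GF}(q^n)$ with $f(0)=0$ such that, for every $s\in\mathrm{GF}(q^n)$, the map $x\mapsto (f(x+s)+f(s))/x$ is a permutation of $\mathrm{GF}(q^n)\setminus\{0\}$. Let $\mathfrak F$ be the $\mathrm{GF}(q)$-vector space of all functions $f:\mathrm{GF}(q^n)\to\mathrm{GF}(q^n)$ with $f(0)=0$. An $n$-dimensional Wild subspace over $\mathrm{GF}(q)$ is an $n$-dimensional $\mathrm{GF}(q)$-subspace $W$ of $\mathfrak F$ every nonzero element of which is an o-permutation over $\mathrm{GF}(q^n)$. *)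

theory Defs
  imports Main
begin

text \<open>The ambient finite field GF(q^n) is a finite field type 'a; the subfield GF(q)
  is a subset K of 'a closed under the field operations.\<close>

definition is_subfield :: "'a::field set \<Rightarrow> bool" where
  "is_subfield K \<longleftrightarrow> 0 \<in> K \<and> 1 \<in> K \<and>
     (\<forall>x\<in>K. \<forall>y\<in>K. x + y \<in> K \<and> x * y \<in> K) \<and>
     (\<forall>x\<in>K. - x \<in> K) \<and> (\<forall>x\<in>K. x \<noteq> 0 \<longrightarrow> inverse x \<in> K)"

definition o_permutation :: "('a::field \<Rightarrow> 'a) \<Rightarrow> bool" where
  "o_permutation f \<longleftrightarrow> f 0 = 0 \<and>
     (\<forall>s. bij_betw (\<lambda>x. (f (x + s) + f s) / x) (UNIV - {0}) (UNIV - {0}))"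

definition zero_fixing :: "('a::field \<Rightarrow> 'a) set" where
  "zero_fixing = {f. f 0 = 0}"

definition lin_comb :: "('a::field \<Rightarrow> 'a) list \<Rightarrow> (nat \<Rightarrow> 'a) \<Rightarrow> ('a \<Rightarrow> 'a)" where
  "lin_comb bs c = (\<lambda>x. \<Sum>i<length bs. c i * (bs ! i) x)"

definition is_subspace_dim :: "'a::field set \<Rightarrow> nat \<Rightarrow> ('a \<Rightarrow> 'a) set \<Rightarrow> bool" where
  "is_subspace_dim K n W \<longleftrightarrow>
     (\<exists>bs. length bs = n \<and> set bs \<subseteq> zero_fixing \<and>
        W = {lin_comb bs c | c. \<forall>i<n. c i \<in> K} \<and>
        (\<forall>c. (\<forall>i<n. c i \<in> K) \<longrightarrow> lin_comb bs c = (\<lambda>_. 0) \<longrightarrow> (\<forall>i<n. c i = 0)))"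

definition wild_subspace :: "'a::field set \<Rightarrow> nat \<Rightarrow> ('a \<Rightarrow> 'a) set \<Rightarrow> bool" where
  "wild_subspace K n W \<longleftrightarrow> is_subspace_dim K n W \<and>
     (\<forall>f\<in>W. f \<noteq> (\<lambda>_. 0) \<longrightarrow> o_permutation f)"

end

theory Submission
  imports Defs "HOL-Library.FuncSet"
begin

theorem corollary1:
  fixes K :: "'a::{field,finite} set" and n :: nat and W :: "('a \<Rightarrow> 'a) set"
  assumes "is_subfield K"
    and "even (card K)"
    and "card (UNIV :: 'a set) = card K ^ n"
    and "n \<ge> 1"
    and "wild_subspace K n W"
  shows "(\<lambda>f. f 1) ` W = UNIV"
proof -
  have ws: "is_subspace_dim K n W" and op: "\<And>f. f \<in> W \<Longrightarrow> f \<noteq> (\<lambda>_. 0) \<Longrightarrow> o_permutation f"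
    using assms(5) unfolding wild_subspace_def by auto
  from ws obtain bs where bs: "length bs = n \<and> set bs \<subseteq> zero_fixing \<and>
        W = {lin_comb bs c | c. \<forall>i<n. c i \<in> K} \<and>
        (\<forall>c. (\<forall>i<n. c i \<in> K) \<longrightarrow> lin_comb bs c = (\<lambda>_. 0) \<longrightarrow> (\<forall>i<n. c i = 0))"
    unfolding is_subspace_dim_def by (elim exE) (rule that)
  have Wd: "W = {lin_comb bs c | c. \<forall>i<n. c i \<in> K}" using bs by (elim conjE)
  have ind: "\<And>c. (\<forall>i<n. c i \<in> K) \<Longrightarrow> lin_comb bs c = (\<lambda>_. 0) \<Longrightarrow> (\<forall>i<n. c i = 0)"
    using bs by (elim conjE) simp
  have sub: "x - y \<in> K" if "x \<in> K" "y \<in> K" for x y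
    proof -
    have "- y \<in> K" using assms(1) that(2) unfolding is_subfield_def by blast
    hence "x + - y \<in> K" using assms(1) that(1) unfolding is_subfield_def by blast
    thus ?thesis by simp
  qed
  define S where "S = PiE {..<n} (\<lambda>_. K)"
  define g where "g = (\<lambda>c. lin_comb bs c 1)"
  have nz: "f 1 \<noteq> 0" if "f \<in> W" "f \<noteq> (\<lambda>_. 0)" for f
  proof -
    have o: "o_permutation f" using op that by blast
    have f0: "f 0 = 0" using o unfolding o_permutation_def by (rule conjunct1)
    have "\<forall>s. bij_betw (\<lambda>x. (f (x + s) + f s) / x) (UNIV - {0}) (UNIV - {0})"
      using o unfolding o_permutation_def by (rule conjunct2)
    note b = this[rule_format, of 0]
    have "(1::'a) \<in> UNIV - {0}" by simp
    note bij_betw_apply[OF b this]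
    thus ?thesis using f0 by simp
  qed
  have inj: "inj_on g S"
  proof (rule inj_onI)
    fix c d assume c: "c \<in> S" and d: "d \<in> S" and eq: "g c = g d"
    define e where "e = (\<lambda>i. c i - d i)"
    have eK: "\<forall>i<n. e i \<in> K" using c d sub unfolding S_def e_def by (auto simp: PiE_def Pi_def)
    have le: "lin_comb bs e = (\<lambda>x. lin_comb bs c x - lin_comb bs d x)"
      unfolding lin_comb_def e_def by (simp add: left_diff_distrib sum_subtractf)
    have inW: "lin_comb bs e \<in> W" using eK Wd by blast
    have "lin_comb bs e 1 = 0" using eq le unfolding g_def by simp
    hence "lin_comb bs e = (\<lambda>_. 0)" using nz[OF inW] by blast
    hence "\<forall>i<n. e i = 0" by (rule ind[OF eK])
    hence "\<forall>i<n. c i = d i" unfolding e_def by simp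
    hence cd: "\<forall>i<n. c i = d i" .
    show "c = d"
    proof (rule PiE_ext[OF c[unfolded S_def] d[unfolded S_def]])
      fix i assume "i \<in> {..<n}" thus "c i = d i" using cd by simp
    qed
  qed
  have cardS: "card S = card K ^ n" unfolding S_def by (simp add: card_PiE)
  have "card (g ` S) = card (UNIV :: 'a set)" using inj cardS assms(3) by (simp add: card_image)
  hence gS: "g ` S = UNIV" using card_subset_eq[of UNIV "g ` S"] by simp
  have "g ` S \<subseteq> (\<lambda>f. f 1) ` W"
  proof
    fix y assume "y \<in> g ` S"
    then obtain c where "c \<in> S" "y = g c" by blast
    have y: "y = lin_comb bs c 1" using \<open>y = g c\<close> unfolding g_def .
    have "\<forall>i<n. c i \<in> K" using \<open>c \<in> S\<close> unfolding S_def by (simp add: PiE_iff)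
    hence "lin_comb bs c \<in> W" unfolding Wd by blast
    hence "(\<lambda>f. f 1) (lin_comb bs c) \<in> (\<lambda>f. f 1) ` W" by (rule imageI)
    thus "y \<in> (\<lambda>f. f 1) ` W" using y by simp
  qed
  hence "UNIV \<subseteq> (\<lambda>f. f 1) ` W" unfolding gS .
  thus ?thesis by (rule top_le)
qed

end
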